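(* Let $B>0$ and $L\ge2$. For every $f\in\mathcal{D}(B,L)$ and all $x,y\in\mathbb{R}^p$, $|f(x)-f(y)|\le\frac B4\|x-y\|_2$ and $|f(x)-f(y)|\le2$.
   Context: $\mathcal{D}(B,L)$ is the class of networks $f:\mathbb{R}^p\to\mathbb{R}$ defined as follows: first-layer nodes are $x\mapsto\sigma(w^Tx+b)$ with $\sigma(u)=1/(1+e^{-u})$, $w\in\mathbb{R}^p$, $\|w\|_2\le B$, $b\in\mathbb{R}$; for $1\le l<L-1$, a node of layer $l+1$ is $x\mapsto\max\big(\sum_{i=1}^{d^{(l)}}w_if^{(l)}_i(x),0\big)$ with $f_i^{(l)}$ nodes of layer $l$, finite width $d^{(l)}$, and $\sum_i|w_i|\le1$; the output is $f(x)=\sum_{i=1}^{d^{(L-1)}}w_if_i^{(L-1)}(x)$ with $\sum_i|w_i|\le1$. *)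

theory Defs
  imports "HOL-Analysis.Analysis"
begin

definition sigmoid :: "real \<Rightarrow> real" where
  "sigmoid u = 1 / (1 + exp (- u))"

text \<open>Nodes of layer l (l \<ge> 1) of networks in D(B,L); inputs are vectors in R^p,
  represented as real ^ 'p. Layer 0 is unused (empty).\<close>
primrec layer_nodes :: "real \<Rightarrow> nat \<Rightarrow> (real ^ ('p::finite) \<Rightarrow> real) set" where
  "layer_nodes B 0 = {}"
| "layer_nodes B (Suc l) =
     (if l = 0 then
        {(\<lambda>x. sigmoid (w \<bullet> x + b)) | (w :: real ^ 'p) b. norm w \<le> B}
      else
        {(\<lambda>x. max (\<Sum>i<d. c i * g i x) 0) | (d::nat) c g.
           0 < d \<and> (\<Sum>i<d. \<bar>c i\<bar>) \<le> 1 \<and> (\<forall>i<d. g i \<in> layer_nodes B l)})"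

definition DNN :: "real \<Rightarrow> nat \<Rightarrow> (real ^ ('p::finite) \<Rightarrow> real) set" where
  "DNN B L =
     {(\<lambda>x. \<Sum>i<d. c i * g i x) | (d::nat) c g.
        0 < d \<and> (\<Sum>i<d. \<bar>c i\<bar>) \<le> 1 \<and> (\<forall>i<d. g i \<in> layer_nodes B (L - 1))}"

end

theory Submission
  imports Defs
begin

lemma sigmoid_bounds: "0 \<le> sigmoid u \<and> sigmoid u \<le> 1"
  unfolding sigmoid_def by (simp add: add_pos_pos)

lemma sigmoid_deriv:
  "(sigmoid has_real_derivative (exp (- u) / (1 + exp (- u))^2)) (at u)"
proof -
  have pos: "1 + exp (- u) \<noteq> 0" using exp_gt_zero[of "- u"] by linarith
  show ?thesis unfolding sigmoid_def
    by (auto intro!: derivative_eq_intros simp: power2_eq_square pos)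
qed

lemma sigmoid_deriv_le: "exp (- (u::real)) / (1 + exp (- u))^2 \<le> 1/4"
proof -
  define t where "t = exp (- u)"
  have t: "t > 0" unfolding t_def by simp
  have "(1 + t)^2 - 4 * t = (1 - t)^2" by (simp add: power2_eq_square algebra_simps)
  then have "4 * t \<le> (1 + t)^2" using zero_le_power2[of "1 - t"] by linarith
  then show ?thesis using t unfolding t_def[symmetric] by (simp add: divide_simps)
qed

lemma sigmoid_lip: "\<bar>sigmoid a - sigmoid b\<bar> \<le> \<bar>a - b\<bar> / 4"
proof -
  have main: "\<bar>sigmoid b' - sigmoid a'\<bar> \<le> (b' - a') / 4" if "a' < b'" for a' b'
  proof -
    have "\<exists>z>a'. z < b' \<and> sigmoid b' - sigmoid a' = (b' - a') * (exp (- z) / (1 + exp (- z))^2)"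
      by (rule MVT2[OF that]) (rule sigmoid_deriv)
    then obtain z where "a' < z" "z < b'"
      "sigmoid b' - sigmoid a' = (b' - a') * (exp (- z) / (1 + exp (- z))^2)" by blast
    moreover have "0 \<le> exp (- z) / (1 + exp (- z))^2" by simp
    moreover have "(b' - a') * (exp (- z) / (1 + exp (- z))^2) \<le> (b' - a') * (1/4)"
      using sigmoid_deriv_le[of z] that by (intro mult_left_mono) auto
    ultimately show ?thesis using that by (simp add: abs_mult)
  qed
  show ?thesis
  proof (cases a b rule: linorder_cases)
    case less then show ?thesis using main[OF less] by (simp add: abs_minus_commute)
  next
    case equal then show ?thesis by simp
  next
    case greater then show ?thesis using main[OF greater] by simp
  qed
qed

lemma comb_lip:
  fixes c :: "nat \<Rightarrow> real"
  assumes "(\<Sum>i<d. \<bar>c i\<bar>) \<le> 1" "\<forall>i<d. \<bar>u i - v i\<bar> \<le> K" "K \<ge> 0"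
  shows "\<bar>(\<Sum>i<d. c i * u i) - (\<Sum>i<d. c i * v i)\<bar> \<le> K"
proof -
  have "\<bar>(\<Sum>i<d. c i * u i) - (\<Sum>i<d. c i * v i)\<bar> = \<bar>\<Sum>i<d. c i * (u i - v i)\<bar>"
    by (simp add: sum_subtractf right_diff_distrib)
  also have "\<dots> \<le> (\<Sum>i<d. \<bar>c i * (u i - v i)\<bar>)" by (rule sum_abs)
  also have "\<dots> \<le> (\<Sum>i<d. \<bar>c i\<bar> * K)"
    using assms(2) by (intro sum_mono) (simp add: abs_mult mult_left_mono)
  also have "\<dots> = (\<Sum>i<d. \<bar>c i\<bar>) * K" by (simp add: sum_distrib_right)
  also have "\<dots> \<le> K" using assms(1,3) by (simp add: mult_left_le_one_le)
  finally show ?thesis .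
qed

lemma comb_bound:
  fixes c :: "nat \<Rightarrow> real"
  assumes "(\<Sum>i<d. \<bar>c i\<bar>) \<le> 1" "\<forall>i<d. 0 \<le> u i \<and> u i \<le> 1"
  shows "(\<Sum>i<d. c i * u i) \<le> 1"
proof -
  have "(\<Sum>i<d. c i * u i) \<le> (\<Sum>i<d. \<bar>c i\<bar>)"
  proof (intro sum_mono)
    fix i assume "i \<in> {..<d}"
    then have u: "0 \<le> u i" "u i \<le> 1" using assms(2) by auto
    have "c i * u i \<le> \<bar>c i\<bar> * u i" using u by (intro mult_right_mono) auto
    also have "\<dots> \<le> \<bar>c i\<bar>" using u by (intro mult_left_le) auto
    finally show "c i * u i \<le> \<bar>c i\<bar>" .
  qed
  then show ?thesis using assms(1) by simp
qed

lemma nodes_prop: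
  fixes B :: real
  assumes "g \<in> layer_nodes B l" "B \<ge> 0"
  shows "(\<forall>x. 0 \<le> g x \<and> g x \<le> 1) \<and> (\<forall>x y. \<bar>g x - g y\<bar> \<le> B / 4 * norm (x - y))"
  using assms(1)
proof (induction l arbitrary: g)
  case 0 then show ?case by simp
next
  case (Suc l)
  show ?case
  proof (cases "l = 0")
    case True
    then obtain w :: "real ^ 'a" and b where g: "g = (\<lambda>x. sigmoid (w \<bullet> x + b))" "norm w \<le> B"
      using Suc.prems by auto
    have "\<bar>g x - g y\<bar> \<le> B / 4 * norm (x - y)" for x y
    proof -
      have "\<bar>g x - g y\<bar> \<le> \<bar>(w \<bullet> x + b) - (w \<bullet> y + b)\<bar> / 4" using g(1) sigmoid_lip[of "w \<bullet> x + b" "w \<bullet> y + b"] by simp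
      also have "\<bar>(w \<bullet> x + b) - (w \<bullet> y + b)\<bar> = \<bar>w \<bullet> (x - y)\<bar>" by (simp add: inner_diff_right)
      also have "\<dots> \<le> norm w * norm (x - y)" by (rule Cauchy_Schwarz_ineq2)
      also have "\<dots> \<le> B * norm (x - y)" using g(2) by (simp add: mult_right_mono)
      finally show ?thesis by simp
    qed
    then show ?thesis using g(1) sigmoid_bounds by simp
  next
    case False
    have "\<exists>(d::nat) c h. g = (\<lambda>x. max (\<Sum>i<d. c i * h i x) 0) \<and>
      (\<Sum>i<d. \<bar>c i\<bar>) \<le> 1 \<and> (\<forall>i<d. h i \<in> layer_nodes B l)"
      using Suc.prems False unfolding layer_nodes.simps if_not_P[OF False] mem_Collect_eq
      by blast
    then obtain d :: nat and c h where g: "g = (\<lambda>x. max (\<Sum>i<d. c i * h i x) 0)"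
      "(\<Sum>i<d. \<bar>c i\<bar>) \<le> 1" "\<forall>i<d. h i \<in> layer_nodes B l"
      by blast
    have IH: "\<forall>i<d. (\<forall>x. 0 \<le> h i x \<and> h i x \<le> 1) \<and> (\<forall>x y. \<bar>h i x - h i y\<bar> \<le> B / 4 * norm (x - y))"
      using Suc.IH g(3) by blast
    have "\<bar>g x - g y\<bar> \<le> B / 4 * norm (x - y)" for x y
    proof -
      have "\<bar>(\<Sum>i<d. c i * h i x) - (\<Sum>i<d. c i * h i y)\<bar> \<le> B / 4 * norm (x - y)"
        using IH assms(2) by (intro comb_lip[OF g(2)]) auto
      then show ?thesis unfolding g(1) by linarith
    qed
    moreover have "g x \<le> 1" for x
      using comb_bound[OF g(2), of "\<lambda>i. h i x"] IH unfolding g(1) by auto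
    ultimately show ?thesis unfolding g(1) by auto
  qed
qed

theorem lemma1:
  fixes B :: real and L :: nat and f :: "real ^ 'p \<Rightarrow> real" and x y :: "real ^ 'p"
  assumes "B > 0" and "L \<ge> 2" and "f \<in> DNN B L"
  shows "\<bar>f x - f y\<bar> \<le> B / 4 * norm (x - y) \<and> \<bar>f x - f y\<bar> \<le> 2"
proof -
  obtain d and c :: "nat \<Rightarrow> real" and g :: "nat \<Rightarrow> real ^ 'p \<Rightarrow> real" where f: "f = (\<lambda>x. \<Sum>i<d. c i * g i x)"
    "(\<Sum>i<d. \<bar>c i\<bar>) \<le> 1" "\<forall>i<d. g i \<in> layer_nodes B (L - 1)"
    using assms(3) unfolding DNN_def mem_Collect_eq by (elim exE conjE) auto
  have P: "\<forall>i<d. (\<forall>x. 0 \<le> g i x \<and> g i x \<le> 1) \<and> (\<forall>x y. \<bar>g i x - g i y\<bar> \<le> B / 4 * norm (x - y))"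
    using nodes_prop f(3) assms(1) by (meson less_imp_le)
  have 1: "\<bar>f x - f y\<bar> \<le> B / 4 * norm (x - y)"
    unfolding f(1) using P assms(1) by (intro comb_lip[OF f(2)]) auto
  have "\<forall>i<d. \<bar>g i x - g i y\<bar> \<le> 1"
  proof (intro allI impI)
    fix i assume "i < d"
    then have "0 \<le> g i x \<and> g i x \<le> 1" "0 \<le> g i y \<and> g i y \<le> 1" using P by blast+
    then show "\<bar>g i x - g i y\<bar> \<le> 1" by linarith
  qed
  then have "\<bar>f x - f y\<bar> \<le> 1"
    unfolding f(1) by (intro comb_lip[OF f(2)]) auto
  then show ?thesis using 1 by simp
qed

end
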